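(* Let $P\ge 2$ be an integer. Let $\omega_1,\dots,\omega_P$ be pairwise distinct nonzero real numbers, let $\beta_1,\dots,\beta_P$ be nonzero real numbers, and let $\kappa_1,\dots,\kappa_P$ be pairwise distinct nonzero real numbers such that $1-\kappa_i\omega_j\neq 0$ for all $i,j\in\{1,\dots,P\}$. (a) Let $A=(a_{ij})_{i,j=1}^{P}$ with $a_{ij}=\dfrac{\kappa_i\beta_j}{1-\kappa_i\omega_j}$. Then $A$ is invertible and $A^{-1}=(\tilde a_{ij})_{i,j=1}^P$ with $$\tilde a_{ij}=\frac{1-\kappa_j\omega_i}{\beta_i\,\kappa_j}\;\prod_{\substack{k=1\\k\neq j}}^{P}\frac{1-\kappa_k\omega_i}{\kappa_k-\kappa_j}\;\prod_{\substack{l=1\\l\neq i}}^{P}\frac{1-\kappa_j\omega_l}{\omega_l-\omega_i}.$$ (b) Let $B=(b_{ij})_{i,j=1}^{P-1}$ with $b_{ij}=\dfrac{1-\omega_j/\omega_P}{1-\kappa_i\omega_j}$. Then $B$ is invertible and $B^{-1}=(\tilde b_{ij})_{i,j=1}^{P-1}$ with $$\tilde b_{ij}=\frac{\omega_P\,(1-\kappa_j\omega_i)}{1-\kappa_j\omega_P}\;\prod_{\substack{k=1\\k\neq j}}^{P-1}\frac{1-\kappa_k\omega_i}{\kappa_k-\kappa_j}\;\prod_{\substack{l=1\\l\neq i}}^{P}\frac{1-\kappa_j\omega_l}{\omega_l-\omega_i}.$$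
   Context: In the paper, $\omega_i$ are the weights of a $P$-level Scheduled Relaxation Jacobi scheme, $\beta_i$ their relative frequencies, $\kappa_1,\dots,\kappa_{P-1}$ the interior local maxima of the per-iteration amplification factor and $\kappa_P$ is set equal to the upper endpoint $\kappa_M=2$. In products, each factor appears once unless it depends on the product index. *)

theory Defs
  imports "Jordan_Normal_Form.Matrix"
begin

(* Indices are 0-based: the paper's index i \<in> {1..P} corresponds to i-1 \<in> {0..<P}.
   In particular the paper's \<omega>_P is \<omega> (P-1). *)

definition SRJ_A :: "nat \<Rightarrow> (nat \<Rightarrow> real) \<Rightarrow> (nat \<Rightarrow> real) \<Rightarrow> (nat \<Rightarrow> real) \<Rightarrow> real mat" where
  "SRJ_A P \<omega> \<beta> \<kappa> = mat P P (\<lambda>(i,j). \<kappa> i * \<beta> j / (1 - \<kappa> i * \<omega> j))"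

definition SRJ_A_inv :: "nat \<Rightarrow> (nat \<Rightarrow> real) \<Rightarrow> (nat \<Rightarrow> real) \<Rightarrow> (nat \<Rightarrow> real) \<Rightarrow> real mat" where
  "SRJ_A_inv P \<omega> \<beta> \<kappa> = mat P P (\<lambda>(i,j).
     (1 - \<kappa> j * \<omega> i) / (\<beta> i * \<kappa> j)
     * (\<Prod>k\<in>{0..<P} - {j}. (1 - \<kappa> k * \<omega> i) / (\<kappa> k - \<kappa> j))
     * (\<Prod>l\<in>{0..<P} - {i}. (1 - \<kappa> j * \<omega> l) / (\<omega> l - \<omega> i)))"

definition SRJ_B :: "nat \<Rightarrow> (nat \<Rightarrow> real) \<Rightarrow> (nat \<Rightarrow> real) \<Rightarrow> real mat" where
  "SRJ_B P \<omega> \<kappa> = mat (P - 1) (P - 1) (\<lambda>(i,j). (1 - \<omega> j / \<omega> (P - 1)) / (1 - \<kappa> i * \<omega> j))"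

definition SRJ_B_inv :: "nat \<Rightarrow> (nat \<Rightarrow> real) \<Rightarrow> (nat \<Rightarrow> real) \<Rightarrow> real mat" where
  "SRJ_B_inv P \<omega> \<kappa> = mat (P - 1) (P - 1) (\<lambda>(i,j).
     \<omega> (P - 1) * (1 - \<kappa> j * \<omega> i) / (1 - \<kappa> j * \<omega> (P - 1))
     * (\<Prod>k\<in>{0..<P - 1} - {j}. (1 - \<kappa> k * \<omega> i) / (\<kappa> k - \<kappa> j))
     * (\<Prod>l\<in>{0..<P} - {i}. (1 - \<kappa> j * \<omega> l) / (\<omega> l - \<omega> i)))"

end

theory Submission
  imports Defs "HOL-Computational_Algebra.Polynomial" "Jordan_Normal_Form.Determinant"
begin


lemma degree_lin_prod: "finite T \<Longrightarrow> degree (\<Prod>l\<in>T. [:a l, b l:]) \<le> card T"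
proof (induction T rule: finite_induct)
  case empty then show ?case by simp
next
  case (insert t T)
  have "degree (\<Prod>l\<in>insert t T. [:a l, b l:]) = degree ([:a t, b t:] * (\<Prod>l\<in>T. [:a l, b l:]))"
    using insert by simp
  also have "\<dots> \<le> degree [:a t, b t:] + degree (\<Prod>l\<in>T. [:a l, b l:])" by (rule degree_mult_le)
  also have "\<dots> \<le> 1 + card T" using insert by (intro add_mono) auto
  finally show ?case using insert by simp
qed

lemma lagrange:
  fixes \<omega> :: "nat \<Rightarrow> real" and p :: "real poly"
  assumes fin: "finite S" and inj: "inj_on \<omega> S" and deg: "degree p < card S"
  shows "poly p x = (\<Sum>k\<in>S. poly p (\<omega> k) * (\<Prod>l\<in>S-{k}. (\<omega> l - x)) / (\<Prod>l\<in>S-{k}. (\<omega> l - \<omega> k)))"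
proof -
  define L where "L = (\<Sum>k\<in>S. smult (poly p (\<omega> k) / (\<Prod>l\<in>S-{k}. (\<omega> l - \<omega> k))) (\<Prod>l\<in>S-{k}. [:\<omega> l, -1:]))"
  have polyL: "poly L y = (\<Sum>k\<in>S. poly p (\<omega> k) * (\<Prod>l\<in>S-{k}. (\<omega> l - y)) / (\<Prod>l\<in>S-{k}. (\<omega> l - \<omega> k)))" for y
    unfolding L_def poly_sum poly_smult poly_prod by (simp add: mult.commute)
  have S0: "S \<noteq> {}" using deg by auto
  have degL: "degree L < card S"
  proof -
    have "degree L \<le> card S - 1"
      unfolding L_def
    proof (rule degree_sum_le[OF fin])
      fix k assume k: "k \<in> S"
      have "degree (smult (poly p (\<omega> k) / (\<Prod>l\<in>S-{k}. (\<omega> l - \<omega> k))) (\<Prod>l\<in>S-{k}. [:\<omega> l, -1:]))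
          \<le> degree (\<Prod>l\<in>S-{k}. [:\<omega> l, -1:])" by (rule degree_smult_le)
      also have "\<dots> \<le> card (S - {k})" using fin by (intro degree_lin_prod) auto
      also have "\<dots> = card S - 1" using k fin by simp
      finally show "degree (smult (poly p (\<omega> k) / (\<Prod>l\<in>S-{k}. (\<omega> l - \<omega> k))) (\<Prod>l\<in>S-{k}. [:\<omega> l, -1:])) \<le> card S - 1" .
    qed
    moreover have "card S > 0" using S0 fin by (simp add: card_gt_0_iff)
    ultimately show ?thesis by linarith
  qed
  have "p = L"
  proof (rule poly_eqI_degree[where A="\<omega> ` S"])
    fix z assume "z \<in> \<omega> ` S"
    then obtain j where j: "j \<in> S" "z = \<omega> j" by auto
    have "poly L z = poly p (\<omega> j) * (\<Prod>l\<in>S-{j}. (\<omega> l - \<omega> j)) / (\<Prod>l\<in>S-{j}. (\<omega> l - \<omega> j))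
        + (\<Sum>k\<in>S-{j}. poly p (\<omega> k) * (\<Prod>l\<in>S-{k}. (\<omega> l - \<omega> j)) / (\<Prod>l\<in>S-{k}. (\<omega> l - \<omega> k)))"
      unfolding polyL j(2) by (rule sum.remove[OF fin j(1)])
    also have "(\<Sum>k\<in>S-{j}. poly p (\<omega> k) * (\<Prod>l\<in>S-{k}. (\<omega> l - \<omega> j)) / (\<Prod>l\<in>S-{k}. (\<omega> l - \<omega> k))) = 0"
    proof (rule sum.neutral, rule ballI)
      fix k assume "k \<in> S - {j}"
      then have "(\<Prod>l\<in>S-{k}. (\<omega> l - \<omega> j)) = 0" using fin j(1) by (intro prod_zero) auto
      then show "poly p (\<omega> k) * (\<Prod>l\<in>S-{k}. (\<omega> l - \<omega> j)) / (\<Prod>l\<in>S-{k}. (\<omega> l - \<omega> k)) = 0" by simp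
    qed
    also have "(\<Prod>l\<in>S-{j}. (\<omega> l - \<omega> j)) \<noteq> 0"
    proof
      assume "(\<Prod>l\<in>S-{j}. (\<omega> l - \<omega> j)) = 0"
      then obtain l where l: "l \<in> S - {j}" "\<omega> l - \<omega> j = 0" using fin by (meson finite_Diff prod_zero_iff)
      then have "l = j" using inj j(1) by (intro inj_onD[OF inj]) auto
      then show False using l by simp
    qed
    ultimately show "poly p z = poly L z" using j by simp
  next
    show "degree p < card (\<omega> ` S)" using deg inj by (simp add: card_image)
    show "degree L < card (\<omega> ` S)" using degL inj by (simp add: card_image)
  qed
  then have "poly p x = poly L x" by simp
  also have "\<dots> = (\<Sum>k\<in>S. poly p (\<omega> k) * (\<Prod>l\<in>S-{k}. (\<omega> l - x)) / (\<Prod>l\<in>S-{k}. (\<omega> l - \<omega> k)))" by (rule polyL)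
  finally show ?thesis .
qed

lemma lag_kappa:
  fixes \<omega> :: "nat \<Rightarrow> real" and q :: "real poly"
  assumes fin: "finite S" and inj: "inj_on \<omega> S" and deg: "degree q < card S"
    and k0: "\<kappa> \<noteq> 0" and nz: "\<And>l. l \<in> S \<Longrightarrow> 1 - \<kappa> * \<omega> l \<noteq> 0"
  shows "(\<Sum>k\<in>S. poly q (\<omega> k) / ((1 - \<kappa> * \<omega> k) * (\<Prod>l\<in>S-{k}. (\<omega> l - \<omega> k))))
     = - poly q (1/\<kappa>) / (\<kappa> * (-1/\<kappa>)^card S * (\<Prod>l\<in>S. (1 - \<kappa> * \<omega> l)))"
proof -
  define x where "x = 1/\<kappa>"
  define E where "E = (-1/\<kappa>)^card S * (\<Prod>l\<in>S. (1 - \<kappa> * \<omega> l))"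
  have E0: "E \<noteq> 0" unfolding E_def using k0 nz fin by (simp add: prod_zero_iff)
  have PE: "(\<Prod>l\<in>S. (\<omega> l - x)) = E"
  proof -
    have "(\<Prod>l\<in>S. (\<omega> l - x)) = (\<Prod>l\<in>S. (-1/\<kappa>) * (1 - \<kappa> * \<omega> l))"
      unfolding x_def using k0 by (intro prod.cong) (auto simp: field_simps)
    also have "\<dots> = (\<Prod>l\<in>S. (-1/\<kappa>)) * (\<Prod>l\<in>S. (1 - \<kappa> * \<omega> l))" by (rule prod.distrib)
    also have "\<dots> = E" unfolding E_def by (simp only: prod_constant)
    finally show ?thesis .
  qed
  have h1: "(\<Prod>l\<in>S-{k}. (\<omega> l - x)) = - \<kappa> * E / (1 - \<kappa> * \<omega> k)" if k: "k \<in> S" for k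
  proof -
    have "E = (\<omega> k - x) * (\<Prod>l\<in>S-{k}. (\<omega> l - x))" unfolding PE[symmetric] by (rule prod.remove[OF fin k])
    moreover have "\<omega> k - x = - (1 - \<kappa> * \<omega> k) / \<kappa>" unfolding x_def using k0 by (simp add: field_simps)
    ultimately show ?thesis using nz[OF k] k0 by (simp add: field_simps)
  qed
  have "poly q x = (\<Sum>k\<in>S. poly q (\<omega> k) * (\<Prod>l\<in>S-{k}. (\<omega> l - x)) / (\<Prod>l\<in>S-{k}. (\<omega> l - \<omega> k)))"
    by (rule lagrange[OF fin inj deg])
  also have "\<dots> = (\<Sum>k\<in>S. (- \<kappa> * E) * (poly q (\<omega> k) / ((1 - \<kappa> * \<omega> k) * (\<Prod>l\<in>S-{k}. (\<omega> l - \<omega> k)))))"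
    by (intro sum.cong refl) (simp add: h1)
  also have "\<dots> = (- \<kappa> * E) * (\<Sum>k\<in>S. poly q (\<omega> k) / ((1 - \<kappa> * \<omega> k) * (\<Prod>l\<in>S-{k}. (\<omega> l - \<omega> k))))"
    by (simp add: sum_distrib_left)
  finally have eq: "poly q x = (- \<kappa> * E) * (\<Sum>k\<in>S. poly q (\<omega> k) / ((1 - \<kappa> * \<omega> k) * (\<Prod>l\<in>S-{k}. (\<omega> l - \<omega> k))))" .
  have "\<kappa> * (-1/\<kappa>)^card S * (\<Prod>l\<in>S. (1 - \<kappa> * \<omega> l)) = \<kappa> * E" unfolding E_def by (simp only: mult.assoc)
  then show ?thesis unfolding x_def[symmetric] eq using E0 k0 by simp

qed



lemma partA:
  fixes P :: nat and \<omega> \<beta> \<kappa> :: "nat \<Rightarrow> real"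
  assumes "P \<ge> 2"
    and injw: "inj_on \<omega> {0..<P}" and w0: "\<And>i. i < P \<Longrightarrow> \<omega> i \<noteq> 0"
    and b0: "\<And>i. i < P \<Longrightarrow> \<beta> i \<noteq> 0"
    and injk: "inj_on \<kappa> {0..<P}" and k0: "\<And>i. i < P \<Longrightarrow> \<kappa> i \<noteq> 0"
    and nz: "\<And>i j. i < P \<Longrightarrow> j < P \<Longrightarrow> 1 - \<kappa> i * \<omega> j \<noteq> 0"
  shows "SRJ_A P \<omega> \<beta> \<kappa> * SRJ_A_inv P \<omega> \<beta> \<kappa> = 1\<^sub>m P"
proof (rule eq_matI)
  define S where "S = {0..<P}"
  have fin: "finite S" and cardS: "card S = P" unfolding S_def by auto
  define p where "p j = (\<Prod>m\<in>S-{j}. [:1, - \<kappa> m:])" for j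
  define C where "C j = (\<Prod>l\<in>S. (1 - \<kappa> j * \<omega> l))" for j
  define K where "K j = (\<Prod>m\<in>S-{j}. (\<kappa> m - \<kappa> j))" for j
  define D where "D k = (\<Prod>l\<in>S-{k}. (\<omega> l - \<omega> k))" for k
  have pp: "poly (p j) w = (\<Prod>m\<in>S-{j}. (1 - \<kappa> m * w))" for j w
    unfolding p_def poly_prod by (intro prod.cong) (auto simp: algebra_simps)
  have degp: "degree (p j) < card S" if "j \<in> S" for j
  proof -
    have "degree (p j) \<le> card (S - {j})" unfolding p_def using fin by (intro degree_lin_prod) auto
    also have "\<dots> < card S" using that fin by (metis card_Diff1_less)
    finally show ?thesis .
  qed
  have C0: "C j \<noteq> 0" if "j \<in> S" for j
    unfolding C_def using fin that nz by (simp add: prod_zero_iff S_def)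
  have K0: "K j \<noteq> 0" if "j \<in> S" for j
  proof
    assume "K j = 0"
    then obtain m where m: "m \<in> S - {j}" "\<kappa> m - \<kappa> j = 0" unfolding K_def using fin by (meson finite_Diff prod_zero_iff)
    then have "m = j" using that by (intro inj_onD[OF injk]) (auto simp: S_def)
    then show False using m by simp
  qed
  have D0: "D k \<noteq> 0" if "k \<in> S" for k
  proof
    assume "D k = 0"
    then obtain m where m: "m \<in> S - {k}" "\<omega> m - \<omega> k = 0" unfolding D_def using fin by (meson finite_Diff prod_zero_iff)
    then have "m = k" using that by (intro inj_onD[OF injw]) (auto simp: S_def)
    then show False using m by simp
  qed
  have trm: "\<kappa> i * \<beta> k / (1 - \<kappa> i * \<omega> k) * ((1 - \<kappa> j * \<omega> k) / (\<beta> k * \<kappa> j)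
       * (\<Prod>m\<in>S-{j}. (1 - \<kappa> m * \<omega> k) / (\<kappa> m - \<kappa> j))
       * (\<Prod>l\<in>S-{k}. (1 - \<kappa> j * \<omega> l) / (\<omega> l - \<omega> k)))
     = (\<kappa> i * C j / (\<kappa> j * K j)) * (poly (p j) (\<omega> k) / ((1 - \<kappa> i * \<omega> k) * D k))"
    if i: "i \<in> S" and j: "j \<in> S" and k: "k \<in> S" for i j k
  proof -
    have Cr: "C j = (1 - \<kappa> j * \<omega> k) * (\<Prod>l\<in>S-{k}. (1 - \<kappa> j * \<omega> l))"
      unfolding C_def by (rule prod.remove[OF fin k])
    have b: "\<beta> k \<noteq> 0" "\<kappa> j \<noteq> 0" "1 - \<kappa> i * \<omega> k \<noteq> 0" using b0 k0 nz i j k by (auto simp: S_def)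
    show ?thesis unfolding prod_dividef pp Cr K_def[symmetric] D_def[symmetric]
      using b K0[OF j] D0[OF k] by (simp add: field_simps)
  qed
  show "dim_row (SRJ_A P \<omega> \<beta> \<kappa> * SRJ_A_inv P \<omega> \<beta> \<kappa>) = dim_row (1\<^sub>m P)"
    "dim_col (SRJ_A P \<omega> \<beta> \<kappa> * SRJ_A_inv P \<omega> \<beta> \<kappa>) = dim_col (1\<^sub>m P)"
    by (simp_all add: SRJ_A_def SRJ_A_inv_def)
  fix i j assume "i < dim_row (1\<^sub>m P)" "j < dim_col (1\<^sub>m P)"
  then have i: "i \<in> S" and j: "j \<in> S" by (auto simp: S_def)
  have "(SRJ_A P \<omega> \<beta> \<kappa> * SRJ_A_inv P \<omega> \<beta> \<kappa>) $$ (i, j) =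
     (\<Sum>k\<in>S. \<kappa> i * \<beta> k / (1 - \<kappa> i * \<omega> k) * ((1 - \<kappa> j * \<omega> k) / (\<beta> k * \<kappa> j)
       * (\<Prod>m\<in>S-{j}. (1 - \<kappa> m * \<omega> k) / (\<kappa> m - \<kappa> j))
       * (\<Prod>l\<in>S-{k}. (1 - \<kappa> j * \<omega> l) / (\<omega> l - \<omega> k))))"
    using i j by (simp add: SRJ_A_def SRJ_A_inv_def scalar_prod_def S_def)
  also have "\<dots> = (\<Sum>k\<in>S. (\<kappa> i * C j / (\<kappa> j * K j)) * (poly (p j) (\<omega> k) / ((1 - \<kappa> i * \<omega> k) * D k)))"
    using i j by (intro sum.cong refl trm) auto
  also have "\<dots> = (\<kappa> i * C j / (\<kappa> j * K j)) * (\<Sum>k\<in>S. poly (p j) (\<omega> k) / ((1 - \<kappa> i * \<omega> k) * (\<Prod>l\<in>S-{k}. (\<omega> l - \<omega> k))))"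
    by (simp add: sum_distrib_left D_def)
  also have "(\<Sum>k\<in>S. poly (p j) (\<omega> k) / ((1 - \<kappa> i * \<omega> k) * (\<Prod>l\<in>S-{k}. (\<omega> l - \<omega> k))))
      = - poly (p j) (1/\<kappa> i) / (\<kappa> i * (-1/\<kappa> i)^card S * C i)"
    unfolding C_def
    by (rule lag_kappa[OF fin _ degp[OF j]]) (use injw k0 nz i in \<open>auto simp: S_def\<close>)
  also have "\<kappa> i * C j / (\<kappa> j * K j) * (- poly (p j) (1/\<kappa> i) / (\<kappa> i * (-1/\<kappa> i)^card S * C i)) = 1\<^sub>m P $$ (i, j)"
  proof (cases "i = j")
    case False
    have "poly (p j) (1/\<kappa> i) = 0" unfolding pp using fin i j False k0[of i]
      by (intro prod_zero bexI[of _ i]) (auto simp: S_def)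
    then show ?thesis using False i j by (simp add: S_def)
  next
    case True
    have "poly (p i) (1/\<kappa> i) / K i = (\<Prod>m\<in>S-{i}. (1 - \<kappa> m * (1/\<kappa> i)) / (\<kappa> m - \<kappa> i))"
      unfolding pp K_def prod_dividef ..
    also have "\<dots> = (\<Prod>m\<in>S-{i}. (-1/\<kappa> i))"
    proof (intro prod.cong refl)
      fix m assume m: "m \<in> S - {i}"
      have "\<kappa> m \<noteq> \<kappa> i" using m i by (auto simp: S_def dest: inj_onD[OF injk])
      then show "(1 - \<kappa> m * (1/\<kappa> i)) / (\<kappa> m - \<kappa> i) = -1/\<kappa> i" using k0[of i] i
        by (simp add: S_def field_simps)
    qed
    also have "\<dots> = (-1/\<kappa> i)^(P - 1)" using i fin cardS by simp
    finally have pk: "poly (p i) (1/\<kappa> i) / K i = (-1/\<kappa> i)^(P - 1)" .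
    obtain n where Psuc: "P = Suc n" using assms(1) by (cases P) auto
    have "\<kappa> i * C j / (\<kappa> j * K j) * (- poly (p j) (1/\<kappa> i) / (\<kappa> i * (-1/\<kappa> i)^card S * C i))
       = - (poly (p i) (1/\<kappa> i) / K i) / (\<kappa> i * (-1/\<kappa> i)^P)"
      using True C0[OF i] K0[OF i] k0[of i] i cardS by (simp add: S_def field_simps)
    also have "\<dots> = 1" unfolding pk using k0[of i] i
      by (simp add: Psuc S_def field_simps)
    finally show ?thesis using True i by (simp add: S_def)
  qed
  finally show "(SRJ_A P \<omega> \<beta> \<kappa> * SRJ_A_inv P \<omega> \<beta> \<kappa>) $$ (i, j) = 1\<^sub>m P $$ (i, j)" .
qed



lemma auxB:
  fixes w x a b c q1 q2 K D :: real
  assumes "w \<noteq> 0"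
  shows "(1 - x / w) / a * (w * c / b * (q1 / K) * (q2 / D)) = (c * q2) / (b * K) * ((w - x) * q1 / (a * D))"
proof -
  have "(1 - x / w) * w = w - x" using assms by (simp add: field_simps)
  then show ?thesis by (simp add: divide_inverse inverse_mult_distrib ac_simps)
qed

lemma partB:
  fixes P :: nat and \<omega> \<kappa> :: "nat \<Rightarrow> real"
  assumes P2: "P \<ge> 2"
    and injw: "inj_on \<omega> {0..<P}" and w0: "\<And>i. i < P \<Longrightarrow> \<omega> i \<noteq> 0"
    and injk: "inj_on \<kappa> {0..<P}" and k0: "\<And>i. i < P \<Longrightarrow> \<kappa> i \<noteq> 0"
    and nz: "\<And>i j. i < P \<Longrightarrow> j < P \<Longrightarrow> 1 - \<kappa> i * \<omega> j \<noteq> 0"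
  shows "SRJ_B P \<omega> \<kappa> * SRJ_B_inv P \<omega> \<kappa> = 1\<^sub>m (P - 1)"
proof (rule eq_matI)
  obtain n where Pn: "P = Suc (Suc n)" using P2 by (metis add_2_eq_Suc le_Suc_ex)
  define S where "S = {0..<P}"
  define S' where "S' = {0..<P-1}"
  define wP where "wP = \<omega> (P - 1)"
  have fin: "finite S" "finite S'" and cardS: "card S = P" and cardS': "card S' = P - 1"
    unfolding S_def S'_def by auto
  have SS': "S = insert (P - 1) S'" "P - 1 \<notin> S'" unfolding S_def S'_def using Pn by auto
  have S'S: "S' \<subseteq> S" unfolding S_def S'_def by auto
  define p where "p j = [:wP, -1:] * (\<Prod>m\<in>S'-{j}. [:1, - \<kappa> m:])" for j
  define C where "C j = (\<Prod>l\<in>S. (1 - \<kappa> j * \<omega> l))" for j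
  define K where "K j = (\<Prod>m\<in>S'-{j}. (\<kappa> m - \<kappa> j))" for j
  define D where "D k = (\<Prod>l\<in>S-{k}. (\<omega> l - \<omega> k))" for k
  have pp: "poly (p j) w = (wP - w) * (\<Prod>m\<in>S'-{j}. (1 - \<kappa> m * w))" for j w
    unfolding p_def poly_mult poly_prod by (auto simp: algebra_simps intro!: prod.cong)
  have degp: "degree (p j) < card S" if "j \<in> S'" for j
  proof -
    have "degree (p j) \<le> degree [:wP, -1:] + degree (\<Prod>m\<in>S'-{j}. [:1, - \<kappa> m:])"
      unfolding p_def by (rule degree_mult_le)
    also have "\<dots> \<le> 1 + card (S' - {j})" using fin by (intro add_mono degree_lin_prod) auto
    also have "\<dots> < card S" using that fin cardS cardS' Pn by simp
    finally show ?thesis .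
  qed
  have C0: "C j \<noteq> 0" if "j \<in> S" for j
    unfolding C_def using fin that nz by (simp add: prod_zero_iff S_def)
  have K0: "K j \<noteq> 0" if "j \<in> S'" for j
  proof
    assume "K j = 0"
    then obtain m where m: "m \<in> S' - {j}" "\<kappa> m - \<kappa> j = 0" unfolding K_def using fin by (meson finite_Diff prod_zero_iff)
    then have "m = j" using that by (intro inj_onD[OF injk]) (auto simp: S'_def)
    then show False using m by simp
  qed
  have D0: "D k \<noteq> 0" if "k \<in> S" for k
  proof
    assume "D k = 0"
    then obtain m where m: "m \<in> S - {k}" "\<omega> m - \<omega> k = 0" unfolding D_def using fin by (meson finite_Diff prod_zero_iff)
    then have "m = k" using that by (intro inj_onD[OF injw]) (auto simp: S_def)
    then show False using m by simp
  qed
  have wP0: "wP \<noteq> 0" unfolding wP_def using w0 Pn by simp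
  have trm: "(1 - \<omega> k / wP) / (1 - \<kappa> i * \<omega> k) * (wP * (1 - \<kappa> j * \<omega> k) / (1 - \<kappa> j * wP)
       * (\<Prod>m\<in>S'-{j}. (1 - \<kappa> m * \<omega> k) / (\<kappa> m - \<kappa> j))
       * (\<Prod>l\<in>S-{k}. (1 - \<kappa> j * \<omega> l) / (\<omega> l - \<omega> k)))
     = (C j / ((1 - \<kappa> j * wP) * K j)) * (poly (p j) (\<omega> k) / ((1 - \<kappa> i * \<omega> k) * D k))"
    if i: "i \<in> S" and j: "j \<in> S'" and k: "k \<in> S" for i j k
  proof -
    have Cr: "C j = (1 - \<kappa> j * \<omega> k) * (\<Prod>l\<in>S-{k}. (1 - \<kappa> j * \<omega> l))"
      unfolding C_def by (rule prod.remove[OF fin(1) k])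
    have b: "1 - \<kappa> j * wP \<noteq> 0" "1 - \<kappa> i * \<omega> k \<noteq> 0" using nz i j k Pn S'S by (auto simp: S_def wP_def)
    show ?thesis unfolding prod_dividef pp Cr K_def[symmetric] D_def[symmetric]
      by (rule auxB[OF wP0])
  qed
  show "dim_row (SRJ_B P \<omega> \<kappa> * SRJ_B_inv P \<omega> \<kappa>) = dim_row (1\<^sub>m (P - 1))"
    "dim_col (SRJ_B P \<omega> \<kappa> * SRJ_B_inv P \<omega> \<kappa>) = dim_col (1\<^sub>m (P - 1))"
    by (simp_all add: SRJ_B_def SRJ_B_inv_def)
  fix i j assume "i < dim_row (1\<^sub>m (P - 1))" "j < dim_col (1\<^sub>m (P - 1))"
  then have i: "i \<in> S'" and j: "j \<in> S'" by (auto simp: S'_def)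
  have iS: "i \<in> S" and jS: "j \<in> S" using i j S'S by auto
  define f where "f k = poly (p j) (\<omega> k) / ((1 - \<kappa> i * \<omega> k) * D k)" for k
  have "(SRJ_B P \<omega> \<kappa> * SRJ_B_inv P \<omega> \<kappa>) $$ (i, j) =
     (\<Sum>k\<in>S'. (1 - \<omega> k / wP) / (1 - \<kappa> i * \<omega> k) * (wP * (1 - \<kappa> j * \<omega> k) / (1 - \<kappa> j * wP)
       * (\<Prod>m\<in>S'-{j}. (1 - \<kappa> m * \<omega> k) / (\<kappa> m - \<kappa> j))
       * (\<Prod>l\<in>S-{k}. (1 - \<kappa> j * \<omega> l) / (\<omega> l - \<omega> k))))"
    using i j by (simp add: SRJ_B_def SRJ_B_inv_def scalar_prod_def S_def S'_def wP_def)
  also have "\<dots> = (\<Sum>k\<in>S'. (C j / ((1 - \<kappa> j * wP) * K j)) * f k)"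
    unfolding f_def using i j S'S by (intro sum.cong refl trm) auto
  also have "\<dots> = (C j / ((1 - \<kappa> j * wP) * K j)) * (\<Sum>k\<in>S. f k)"
  proof -
    have "f (P - 1) = 0" unfolding f_def pp wP_def by simp
    then have "(\<Sum>k\<in>S. f k) = (\<Sum>k\<in>S'. f k)" unfolding SS'(1) using SS'(2) fin by simp
    then show ?thesis by (simp add: sum_distrib_left)
  qed
  also have "(\<Sum>k\<in>S. f k) = - poly (p j) (1/\<kappa> i) / (\<kappa> i * (-1/\<kappa> i)^card S * C i)"
    unfolding C_def f_def D_def
    by (rule lag_kappa[OF fin(1) _ degp[OF j]]) (use injw k0 nz iS in \<open>auto simp: S_def\<close>)
  also have "C j / ((1 - \<kappa> j * wP) * K j) * (- poly (p j) (1/\<kappa> i) / (\<kappa> i * (-1/\<kappa> i)^card S * C i)) = 1\<^sub>m (P - 1) $$ (i, j)"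
  proof (cases "i = j")
    case False
    have "(\<Prod>m\<in>S'-{j}. (1 - \<kappa> m * (1/\<kappa> i))) = 0" using fin i j False k0[of i] S'S
      by (intro prod_zero bexI[of _ i]) (auto simp: S_def)
    then have "poly (p j) (1/\<kappa> i) = 0" unfolding pp by simp
    then show ?thesis using False i j by (simp add: S'_def)
  next
    case True
    have ki: "\<kappa> i \<noteq> 0" using k0 iS by (simp add: S_def)
    have "(\<Prod>m\<in>S'-{i}. (1 - \<kappa> m * (1/\<kappa> i))) / K i = (\<Prod>m\<in>S'-{i}. (1 - \<kappa> m * (1/\<kappa> i)) / (\<kappa> m - \<kappa> i))"
      unfolding K_def prod_dividef ..
    also have "\<dots> = (\<Prod>m\<in>S'-{i}. (-1/\<kappa> i))"
    proof (intro prod.cong refl)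
      fix m assume m: "m \<in> S' - {i}"
      have "\<kappa> m \<noteq> \<kappa> i" using m i S'S by (auto simp: S_def dest: inj_onD[OF injk])
      then show "(1 - \<kappa> m * (1/\<kappa> i)) / (\<kappa> m - \<kappa> i) = -1/\<kappa> i" using ki
        by (simp add: field_simps)
    qed
    also have "\<dots> = (-1/\<kappa> i)^n" using i fin cardS' Pn by simp
    finally have pk: "(\<Prod>m\<in>S'-{i}. (1 - \<kappa> m * (1/\<kappa> i))) / K i = (-1/\<kappa> i)^n" .
    have nzP: "1 - \<kappa> i * wP \<noteq> 0" using nz iS Pn by (simp add: S_def wP_def)
    have "C j / ((1 - \<kappa> j * wP) * K j) * (- poly (p j) (1/\<kappa> i) / (\<kappa> i * (-1/\<kappa> i)^card S * C i))
       = - (wP - 1/\<kappa> i) * ((\<Prod>m\<in>S'-{i}. (1 - \<kappa> m * (1/\<kappa> i))) / K i) / ((1 - \<kappa> i * wP) * \<kappa> i * (-1/\<kappa> i)^P)"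
      unfolding pp using True C0[OF iS] K0[OF i] ki cardS nzP by (simp add: field_simps)
    also have "\<dots> = 1" unfolding pk using ki nzP
      by (simp add: Pn field_simps)
    finally show ?thesis using True i by (simp add: S'_def)
  qed
  finally show "(SRJ_B P \<omega> \<kappa> * SRJ_B_inv P \<omega> \<kappa>) $$ (i, j) = 1\<^sub>m (P - 1) $$ (i, j)" .
qed


theorem lemma1:
  fixes P :: nat and \<omega> \<beta> \<kappa> :: "nat \<Rightarrow> real"
  assumes "P \<ge> 2"
    and "inj_on \<omega> {0..<P}" and "\<And>i. i < P \<Longrightarrow> \<omega> i \<noteq> 0"
    and "\<And>i. i < P \<Longrightarrow> \<beta> i \<noteq> 0"
    and "inj_on \<kappa> {0..<P}" and "\<And>i. i < P \<Longrightarrow> \<kappa> i \<noteq> 0"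
    and "\<And>i j. i < P \<Longrightarrow> j < P \<Longrightarrow> 1 - \<kappa> i * \<omega> j \<noteq> 0"
  shows "(invertible_mat (SRJ_A P \<omega> \<beta> \<kappa>)
          \<and> inverts_mat (SRJ_A P \<omega> \<beta> \<kappa>) (SRJ_A_inv P \<omega> \<beta> \<kappa>)
          \<and> inverts_mat (SRJ_A_inv P \<omega> \<beta> \<kappa>) (SRJ_A P \<omega> \<beta> \<kappa>))
       \<and> (invertible_mat (SRJ_B P \<omega> \<kappa>)
          \<and> inverts_mat (SRJ_B P \<omega> \<kappa>) (SRJ_B_inv P \<omega> \<kappa>)
          \<and> inverts_mat (SRJ_B_inv P \<omega> \<kappa>) (SRJ_B P \<omega> \<kappa>))"
proof -
  have AC: "SRJ_A P \<omega> \<beta> \<kappa> \<in> carrier_mat P P" "SRJ_A_inv P \<omega> \<beta> \<kappa> \<in> carrier_mat P P"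
    by (simp_all add: SRJ_A_def SRJ_A_inv_def)
  have AB: "SRJ_A P \<omega> \<beta> \<kappa> * SRJ_A_inv P \<omega> \<beta> \<kappa> = 1\<^sub>m P"
    by (rule partA) (use assms in auto)
  have BA: "SRJ_A_inv P \<omega> \<beta> \<kappa> * SRJ_A P \<omega> \<beta> \<kappa> = 1\<^sub>m P"
    by (rule mat_mult_left_right_inverse[OF AC AB])
  have BC: "SRJ_B P \<omega> \<kappa> \<in> carrier_mat (P - 1) (P - 1)" "SRJ_B_inv P \<omega> \<kappa> \<in> carrier_mat (P - 1) (P - 1)"
    by (simp_all add: SRJ_B_def SRJ_B_inv_def)
  have AB2: "SRJ_B P \<omega> \<kappa> * SRJ_B_inv P \<omega> \<kappa> = 1\<^sub>m (P - 1)"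
    by (rule partB) (use assms in auto)
  have BA2: "SRJ_B_inv P \<omega> \<kappa> * SRJ_B P \<omega> \<kappa> = 1\<^sub>m (P - 1)"
    by (rule mat_mult_left_right_inverse[OF BC AB2])
  have i1: "inverts_mat (SRJ_A P \<omega> \<beta> \<kappa>) (SRJ_A_inv P \<omega> \<beta> \<kappa>)"
    "inverts_mat (SRJ_A_inv P \<omega> \<beta> \<kappa>) (SRJ_A P \<omega> \<beta> \<kappa>)"
    "inverts_mat (SRJ_B P \<omega> \<kappa>) (SRJ_B_inv P \<omega> \<kappa>)"
    "inverts_mat (SRJ_B_inv P \<omega> \<kappa>) (SRJ_B P \<omega> \<kappa>)"
    unfolding inverts_mat_def using AC BC AB BA AB2 BA2 by auto
  have "invertible_mat (SRJ_A P \<omega> \<beta> \<kappa>)" "invertible_mat (SRJ_B P \<omega> \<kappa>)"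
    unfolding invertible_mat_def square_mat.simps using AC BC i1 by auto
  then show ?thesis using i1 by simp
qed

end
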